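(* Let $c,d>0$ and $\mathcal R(c,d)=(0,c)\times(0,d)$. (a) (Torus.) Suppose $u$ is a real-valued eigenfunction with $-\Delta u=\lambda u$ on $\mathcal R(c,d)$ satisfying periodic boundary conditions $u(0,y)=u(c,y)$, $u(x,0)=u(x,d)$, $\partial_x u(0,y)=\partial_x u(c,y)$, $\partial_y u(x,0)=\partial_y u(x,d)$. If $u>0$ on $\partial\mathcal R(c,d)$, then $u\equiv C$ for some positive constant $C$. (b) (Cylinder.) Suppose $u$ is a real-valued eigenfunction with $-\Delta u=\lambda u$ on $\mathcal R(c,d)$ satisfying Neumann boundary conditions $\partial_y u=0$ on $y=0$ and $y=d$, and periodic boundary conditions $u(0,y)=u(c,y)$, $\partial_x u(0,y)=\partial_x u(c,y)$ in $x$. If $u>0$ on $\partial\mathcal R(c,d)$, then $u\equiv C$ for some positive constant $C$. *)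

theory Defs
  imports "HOL-Analysis.Analysis"
begin

definition px :: "(real \<times> real \<Rightarrow> real) \<Rightarrow> real \<times> real \<Rightarrow> real" where
  "px f = (\<lambda>(x, y). deriv (\<lambda>t. f (t, y)) x)"

definition py :: "(real \<times> real \<Rightarrow> real) \<Rightarrow> real \<times> real \<Rightarrow> real" where
  "py f = (\<lambda>(x, y). deriv (\<lambda>t. f (x, t)) y)"

definition has_px_on :: "(real \<times> real) set \<Rightarrow> (real \<times> real \<Rightarrow> real) \<Rightarrow> bool" where
  "has_px_on S f \<longleftrightarrow> (\<forall>(x, y)\<in>S. (\<lambda>t. f (t, y)) differentiable (at x))"

definition has_py_on :: "(real \<times> real) set \<Rightarrow> (real \<times> real \<Rightarrow> real) \<Rightarrow> bool" where
  "has_py_on S f \<longleftrightarrow> (\<forall>(x, y)\<in>S. (\<lambda>t. f (x, t)) differentiable (at y))"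

definition C2_on :: "(real \<times> real) set \<Rightarrow> (real \<times> real \<Rightarrow> real) \<Rightarrow> bool" where
  "C2_on S u \<longleftrightarrow>
     continuous_on S u \<and> has_px_on S u \<and> has_py_on S u \<and>
     continuous_on S (px u) \<and> continuous_on S (py u) \<and>
     has_px_on S (px u) \<and> has_py_on S (px u) \<and> has_px_on S (py u) \<and> has_py_on S (py u) \<and>
     continuous_on S (px (px u)) \<and> continuous_on S (py (px u)) \<and>
     continuous_on S (px (py u)) \<and> continuous_on S (py (py u))"

definition laplacian :: "(real \<times> real \<Rightarrow> real) \<Rightarrow> real \<times> real \<Rightarrow> real" where
  "laplacian u = (\<lambda>p. px (px u) p + py (py u) p)"

end

theory Submission
  imports Defs
begin

lemma ftc_real:
  fixes F F' :: "real \<Rightarrow> real"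
  assumes "a \<le> b" "\<And>x. x \<in> {a..b} \<Longrightarrow> (F has_real_derivative F' x) (at x within {a..b})"
  shows "integral {a..b} F' = F b - F a" "(F' has_integral (F b - F a)) {a..b}"
proof -
  show "(F' has_integral (F b - F a)) {a..b}"
    using assms by (intro fundamental_theorem_of_calculus)
      (auto simp: has_real_derivative_iff_has_vector_derivative)
  then show "integral {a..b} F' = F b - F a" by (rule integral_unique)
qed

lemma deriv_cont:
  assumes "\<And>y. y \<in> {a..b} \<Longrightarrow> (f has_real_derivative f1 y) (at y within {a..b})"
  shows "continuous_on {a..b} f"
  using assms
  by (meson DERIV_continuous continuous_at_imp_continuous_within continuous_on_eq_continuous_within)

definition ode2 :: "real \<Rightarrow> real \<Rightarrow> (real \<Rightarrow> real) \<Rightarrow> (real \<Rightarrow> real) \<Rightarrow> bool" where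
  "ode2 d \<mu> f f1 \<longleftrightarrow> (\<forall>y\<in>{0..d}. (f has_real_derivative f1 y) (at y within {0..d}) \<and>
      (f1 has_real_derivative (- \<mu> * f y)) (at y within {0..d}))"

definition bcond :: "real \<Rightarrow> (real \<Rightarrow> real) \<Rightarrow> (real \<Rightarrow> real) \<Rightarrow> bool" where
  "bcond d f f1 \<longleftrightarrow> (f 0 = f d \<and> f1 0 = f1 d) \<or> (f1 0 = 0 \<and> f1 d = 0)"

lemma ode_neg:
  assumes "d > 0" "ode2 d \<mu> f f1" "\<mu> < 0" "bcond d f f1"
  shows "f 0 = 0"
proof -
  have D: "\<And>y. y \<in> {0..d} \<Longrightarrow> (f has_real_derivative f1 y) (at y within {0..d})"
          "\<And>y. y \<in> {0..d} \<Longrightarrow> (f1 has_real_derivative (- \<mu> * f y)) (at y within {0..d})"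
    using assms(2) unfolding ode2_def by auto
  have cf: "continuous_on {0..d} f" using D(1) by (rule deriv_cont)
  have cf1: "continuous_on {0..d} f1" using D(2) by (rule deriv_cont)
  have "\<And>y. y \<in> {0..d} \<Longrightarrow> ((\<lambda>y. f y * f1 y) has_real_derivative (f1 y * f1 y - \<mu> * (f y * f y))) (at y within {0..d})"
    by (rule DERIV_cong, rule DERIV_mult[OF D(1) D(2)]) (auto simp: algebra_simps)
  from ftc_real(1)[OF _ this] assms(1)
  have "integral {0..d} (\<lambda>y. f1 y * f1 y - \<mu> * (f y * f y)) = f d * f1 d - f 0 * f1 0" by simp
  also have "\<dots> = 0" using assms(4) unfolding bcond_def by auto
  finally have "integral {0..d} (\<lambda>y. f1 y * f1 y - \<mu> * (f y * f y)) = 0" .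
  moreover have "continuous_on {0..d} (\<lambda>y. f1 y * f1 y - \<mu> * (f y * f y))"
    by (intro continuous_intros cf cf1)
  moreover have "\<And>y. f1 y * f1 y - \<mu> * (f y * f y) \<ge> 0"
  proof -
    fix y
    have "0 \<le> f1 y * f1 y" by simp
    moreover have "\<mu> * (f y * f y) \<le> 0" using assms(3) by (intro mult_nonpos_nonneg) auto
    ultimately show "f1 y * f1 y - \<mu> * (f y * f y) \<ge> 0" by linarith
  qed
  ultimately have "\<forall>y\<in>{0..d}. f1 y * f1 y - \<mu> * (f y * f y) = 0"
    using integral_eq_0_iff[of 0 d] assms(1) by blast
  then have e: "f1 0 * f1 0 + (- \<mu>) * (f 0 * f 0) = 0" using assms(1) by auto
  have "0 \<le> f1 0 * f1 0" by simp
  moreover have "\<mu> * (f 0 * f 0) \<le> 0" using assms(3) by (intro mult_nonpos_nonneg) auto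
  ultimately have "\<mu> * (f 0 * f 0) = 0" using e by linarith
  then show ?thesis using assms(3) by (simp add: mult_eq_0_iff)
qed



lemma ode_zero:
  assumes "d > 0" "ode2 d 0 f f1" "bcond d f f1"
  shows "\<forall>y\<in>{0..d}. f y = f 0"
proof -
  have D: "\<And>y. y \<in> {0..d} \<Longrightarrow> (f has_real_derivative f1 y) (at y within {0..d})"
          "\<And>y. y \<in> {0..d} \<Longrightarrow> (f1 has_real_derivative 0) (at y within {0..d})"
    using assms(2) unfolding ode2_def by auto
  have k: "f1 y = f1 0" if "y \<in> {0..d}" for y
  proof -
    have "\<And>x. x \<in> {0..y} \<Longrightarrow> (f1 has_real_derivative 0) (at x within {0..y})"
      using that by (intro DERIV_subset[OF D(2)]) auto
    from ftc_real(1)[OF _ this] that show ?thesis by simp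
  qed
  have lin: "f y = f 0 + f1 0 * y" if "y \<in> {0..d}" for y
  proof -
    have "\<And>x. x \<in> {0..y} \<Longrightarrow> (f has_real_derivative f1 0) (at x within {0..y})"
      using that k by (metis (no_types, lifting) D(1) DERIV_subset atLeastAtMost_iff
          atLeastatMost_subset_iff order.trans order_refl)
    from ftc_real(1)[OF _ this] that have "f y - f 0 = y * f1 0" by simp
    then show ?thesis by (simp add: algebra_simps)
  qed
  have "f1 0 = 0"
  proof (cases "f1 0 = 0")
    case False
    then have "f 0 = f d" using assms(3) unfolding bcond_def by auto
    then have "f1 0 * d = 0" using lin[of d] assms(1) by simp
    then show ?thesis using assms(1) by simp
  qed
  show ?thesis
  proof
    fix y assume "y \<in> {0..d}"
    from lin[OF this] \<open>f1 0 = 0\<close> show "f y = f 0" by simp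
  qed
qed

lemma ode_pos:
  assumes "w > 0" "ode2 d (w^2) f f1" "y \<in> {0..d}"
  shows "f y = f 0 * cos (w * y) + f1 0 / w * sin (w * y)"
    "f1 y = - f 0 * w * sin (w * y) + f1 0 * cos (w * y)"
proof -
  define A where "A = f 0"
  define B where "B = f1 0 / w"
  define h where "h y = f y - (A * cos (w * y) + B * sin (w * y))" for y
  define h1 where "h1 y = f1 y - (- A * w * sin (w * y) + B * w * cos (w * y))" for y
  have D: "\<And>y. y \<in> {0..d} \<Longrightarrow> (f has_real_derivative f1 y) (at y within {0..d})"
          "\<And>y. y \<in> {0..d} \<Longrightarrow> (f1 has_real_derivative (- (w^2) * f y)) (at y within {0..d})"
    using assms(2) unfolding ode2_def by auto
  have Dh: "(h has_real_derivative h1 y) (at y within {0..d})" if "y \<in> {0..d}" for y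
    unfolding h_def[abs_def] h1_def
    using D(1)[OF that] by (auto intro!: derivative_eq_intros simp: algebra_simps)
  have Dh1: "(h1 has_real_derivative (- (w^2) * h y)) (at y within {0..d})" if "y \<in> {0..d}" for y
    unfolding h_def h1_def[abs_def]
    using D(2)[OF that] by (auto intro!: derivative_eq_intros simp: algebra_simps power2_eq_square)
  have DE: "((\<lambda>y. h1 y * h1 y + w^2 * (h y * h y)) has_real_derivative 0) (at x within {0..d})"
    if "x \<in> {0..d}" for x
    using Dh[OF that] Dh1[OF that] by (auto intro!: derivative_eq_intros simp: algebra_simps)
  have E0: "h 0 = 0" "h1 0 = 0" unfolding h_def h1_def A_def B_def using assms(1) by auto
  have "\<And>x. x \<in> {0..y} \<Longrightarrow> ((\<lambda>y. h1 y * h1 y + w^2 * (h y * h y)) has_real_derivative 0) (at x within {0..y})"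
    using assms(3) by (intro DERIV_subset[OF DE]) auto
  from ftc_real(1)[OF _ this] assms(3) E0
  have e: "h1 y * h1 y + w^2 * (h y * h y) = 0" by simp
  have "0 \<le> h1 y * h1 y" by simp
  moreover have "0 \<le> w^2 * (h y * h y)" by simp
  ultimately have "h1 y * h1 y = 0" "w^2 * (h y * h y) = 0" using e by linarith+
  then have "h y = 0" "h1 y = 0" using assms(1) by auto
  then have a1: "f y = A * cos (w * y) + B * sin (w * y)"
    and a2: "f1 y = - A * w * sin (w * y) + B * w * cos (w * y)"
    unfolding h_def h1_def by simp_all
  have Bw: "B * w = f1 0" unfolding B_def using assms(1) by simp
  show "f y = f 0 * cos (w * y) + f1 0 / w * sin (w * y)"
    using a1 unfolding A_def B_def .
  show "f1 y = - f 0 * w * sin (w * y) + f1 0 * cos (w * y)"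
    using a2 unfolding Bw unfolding A_def .
qed

lemma ode_pos_cos:
  assumes "w > 0" "d > 0" "ode2 d (w^2) f f1" "bcond d f f1" "f 0 > 0" "f d > 0"
  shows "cos (w * d) = 1"
proof -
  define A where "A = f 0"
  define B where "B = f1 0 / w"
  define C where "C = cos (w * d)"
  define S where "S = sin (w * d)"
  have dd: "d \<in> {0..d}" using assms(2) by simp
  have fd: "f d = A * C + B * S"
    using ode_pos(1)[OF assms(1) assms(3) dd] unfolding A_def B_def C_def S_def by simp
  have wB: "f1 0 = w * B" unfolding B_def using assms(1) by simp
  have f1d: "f1 d = w * (- A * S + B * C)"
    using ode_pos(2)[OF assms(1) assms(3) dd] unfolding wB
    unfolding A_def C_def S_def by (simp add: algebra_simps)
  have CS: "C^2 + S^2 = 1" unfolding C_def S_def by simp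
  show ?thesis
  proof (cases "f 0 = f d \<and> f1 0 = f1 d")
    case True
    then have "f d = A" unfolding A_def by simp
    then have e1: "A * C + B * S = A" using fd by linarith
    have "f1 d = w * B" using True wB by simp
    then have "w * (- A * S + B * C) = w * B" using f1d by linarith
    then have e2: "- A * S + B * C = B" using assms(1) by simp
    have "A * (A * C + B * S) + B * (- A * S + B * C) = A * A + B * B"
      using e1 e2 by simp
    then have "(A*A + B*B) * C = (A*A + B*B)" by (simp add: algebra_simps)
    moreover have "A*A + B*B > 0" using assms(5) unfolding A_def
      by (simp add: add_pos_nonneg)
    ultimately have "(A*A + B*B) * C = (A*A + B*B) * 1" "A*A + B*B \<noteq> 0" by auto
    then show ?thesis unfolding C_def by (subst (asm) mult_left_cancel) auto
  next
    case False
    then have "f1 0 = 0" "f1 d = 0" using assms(4) unfolding bcond_def by auto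
    then have "B = 0" "A * S = 0" using f1d assms(1) unfolding B_def by auto
    then have "S = 0" using assms(5) unfolding A_def by auto
    then have "C^2 = 1" using CS by simp
    have "A * C > 0" using fd \<open>B = 0\<close> assms(6) by simp
    then have "C > 0" using assms(5) unfolding A_def by (simp add: zero_less_mult_iff)
    with \<open>C^2 = 1\<close> show ?thesis unfolding C_def
      by (simp add: power2_eq_1_iff)
  qed
qed



lemma cont_slice:
  assumes "continuous_on S g" "(\<lambda>x. (x, y)) ` T \<subseteq> S"
  shows "continuous_on T (\<lambda>x. g (x, y))"
  by (rule continuous_on_compose2[OF assms(1) _ assms(2)]) (intro continuous_intros)

lemma cont_slice2:
  assumes "continuous_on S g" "(\<lambda>y. (x, y)) ` T \<subseteq> S"
  shows "continuous_on T (\<lambda>y. g (x, y))"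
  by (rule continuous_on_compose2[OF assms(1) _ assms(2)]) (intro continuous_intros)

lemma px_swap: "px (f \<circ> prod.swap) = py f \<circ> prod.swap"
  by (rule ext) (auto simp: px_def py_def)

lemma py_swap: "py (f \<circ> prod.swap) = px f \<circ> prod.swap"
  by (rule ext) (auto simp: px_def py_def)

lemma swap_swap_image: "prod.swap ` prod.swap ` S = S"
  by (simp add: image_image)

lemma has_px_swap: "has_px_on (prod.swap ` S) (f \<circ> prod.swap) = has_py_on S f"
  unfolding has_px_on_def has_py_on_def by auto

lemma has_py_swap: "has_py_on (prod.swap ` S) (f \<circ> prod.swap) = has_px_on S f"
  unfolding has_px_on_def has_py_on_def by auto

lemma cont_swap: "continuous_on S f \<Longrightarrow> continuous_on (prod.swap ` S) (f \<circ> prod.swap)"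
  by (rule continuous_on_compose[OF continuous_on_swap]) (simp add: swap_swap_image)

lemma cont_swap': "continuous_on S f \<Longrightarrow> continuous_on (prod.swap ` S) (\<lambda>x. f (prod.swap x))"
  using cont_swap[of S f] by (simp add: comp_def)

lemma C2_swap: "C2_on S u \<Longrightarrow> C2_on (prod.swap ` S) (u \<circ> prod.swap)"
  unfolding C2_on_def px_swap py_swap has_px_swap has_py_swap
  by (simp add: cont_swap')

lemma open_swap: "open S \<Longrightarrow> open (prod.swap ` (S :: ('a::topological_space \<times> 'b::topological_space) set))"
proof -
  assume "open S"
  have "prod.swap ` S = prod.swap -` S" by (auto simp: image_iff) (metis swap_simp)
  moreover have "open (prod.swap -` S)"
    using \<open>open S\<close> by (intro open_vimage continuous_intros)
  ultimately show ?thesis by simp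
qed

locale rect =
  fixes c d lam :: real and u :: "real \<times> real \<Rightarrow> real" and S :: "(real \<times> real) set"
  assumes c_pos: "c > 0" and d_pos: "d > 0" and openS: "open S"
    and sub: "{0..c} \<times> {0..d} \<subseteq> S" and C2: "C2_on S u"
    and pde: "\<And>x y. x \<in> {0..c} \<Longrightarrow> y \<in> {0..d} \<Longrightarrow>
               px (px u) (x, y) + py (py u) (x, y) = - lam * u (x, y)"
begin

lemma cont:
  "continuous_on S u" "continuous_on S (px u)" "continuous_on S (py u)"
  "continuous_on S (px (px u))" "continuous_on S (py (py u))"
  "continuous_on S (py (px u))" "continuous_on S (px (py u))"
  using C2 unfolding C2_on_def by auto

lemma inS: "x \<in> {0..c} \<Longrightarrow> y \<in> {0..d} \<Longrightarrow> (x, y) \<in> S"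
  using sub by auto

lemma dx: "(x, y) \<in> S \<Longrightarrow> ((\<lambda>t. u (t, y)) has_real_derivative px u (x, y)) (at x)"
  using C2 unfolding C2_on_def has_px_on_def px_def
  by (auto simp: DERIV_deriv_iff_real_differentiable)

lemma dy: "(x, y) \<in> S \<Longrightarrow> ((\<lambda>t. u (x, t)) has_real_derivative py u (x, y)) (at y)"
  using C2 unfolding C2_on_def has_py_on_def py_def
  by (auto simp: DERIV_deriv_iff_real_differentiable)

lemma dxx: "(x, y) \<in> S \<Longrightarrow> ((\<lambda>t. px u (t, y)) has_real_derivative px (px u) (x, y)) (at x)"
  using C2 unfolding C2_on_def has_px_on_def
  by (auto simp: DERIV_deriv_iff_real_differentiable px_def[of "px u"])

lemma dyy: "(x, y) \<in> S \<Longrightarrow> ((\<lambda>t. py u (x, t)) has_real_derivative py (py u) (x, y)) (at y)"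
  using C2 unfolding C2_on_def has_py_on_def
  by (auto simp: DERIV_deriv_iff_real_differentiable py_def[of "py u"])

lemma cx: "continuous_on S g \<Longrightarrow> y \<in> {0..d} \<Longrightarrow> continuous_on {0..c} (\<lambda>x. g (x, y))"
  by (rule cont_slice) (use sub in auto)

lemma cy: "continuous_on S g \<Longrightarrow> x \<in> {0..c} \<Longrightarrow> continuous_on {0..d} (\<lambda>y. g (x, y))"
  by (rule cont_slice2) (use sub in auto)

lemma moment:
  fixes w w' :: "real \<Rightarrow> real" and nu :: real
  assumes wd: "\<And>x. (w has_real_derivative w' x) (at x)"
    and w'd: "\<And>x. (w' has_real_derivative (- (nu^2) * w x)) (at x)"
    and bc: "\<And>y. y \<in> {0..d} \<Longrightarrow> px u (c, y) * w c - u (c, y) * w' c = px u (0, y) * w 0 - u (0, y) * w' 0"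
  shows "ode2 d (lam - nu^2) (\<lambda>y. integral {0..c} (\<lambda>x. u (x, y) * w x))
                             (\<lambda>y. integral {0..c} (\<lambda>x. py u (x, y) * w x))"
proof -
  have cw: "continuous_on A w" for A
    using wd by (meson DERIV_isCont continuous_at_imp_continuous_on)
  have cw': "continuous_on A w'" for A
    using w'd by (meson DERIV_isCont continuous_at_imp_continuous_on)
  have sw: "{0..d} \<times> {0..c} \<subseteq> (\<lambda>(y, x). (x, y)) -` S" using sub by auto
  have cpar: "continuous_on ({0..d} \<times> cbox 0 c) (\<lambda>(y, x). g (x, y) * w x)" if "continuous_on S g" for g
  proof -
    have "prod.swap ` ({0..d} \<times> {0..c}) \<subseteq> S" using sub by auto
    then have "continuous_on ({0..d} \<times> {0..c}) (g \<circ> prod.swap)"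
      by (intro continuous_on_compose continuous_on_swap continuous_on_subset[OF that])
    moreover have "(g \<circ> prod.swap) = (\<lambda>(y, x). g (x, y))" by auto
    ultimately have "continuous_on ({0..d} \<times> {0..c}) (\<lambda>(y, x). g (x, y))" by simp
    moreover have "continuous_on ({0..d} \<times> {0..c}) (w \<circ> snd)"
      using continuous_on_compose[OF continuous_on_snd[OF continuous_on_id] cw] by (simp add: o_def)
    moreover have "(w \<circ> snd) = (\<lambda>(y::real, x). w x)" by auto
    ultimately have "continuous_on ({0..d} \<times> {0..c}) (\<lambda>p. (\<lambda>(y, x). g (x, y)) p * (\<lambda>(y::real, x). w x) p)"
      by (intro continuous_on_mult) auto
    then show ?thesis by (simp add: cbox_interval case_prod_unfold)
  qed
  have cint: "(\<lambda>x. g (x, y) * w x) integrable_on {0..c}" if "continuous_on S g" "y \<in> {0..d}" for g y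
    by (rule integrable_continuous_interval, rule continuous_on_mult[OF cx[OF that] cw])
  show ?thesis
    unfolding ode2_def
  proof (intro ballI conjI)
    fix y assume y: "y \<in> {0..d}"
    have "((\<lambda>y. integral (cbox 0 c) (\<lambda>x. u (x, y) * w x)) has_real_derivative
           integral (cbox 0 c) (\<lambda>x. py u (x, y) * w x)) (at y within {0..d})"
    proof (rule leibniz_rule_field_derivative[where fx = "\<lambda>y x. py u (x, y) * w x"])
      fix y' x assume "y' \<in> {0..d}" "x \<in> cbox 0 c"
      then have "(x, y') \<in> S" using sub by (auto simp: cbox_interval)
      from DERIV_cmult_right[OF dy[OF this], of "w x"]
      show "((\<lambda>y. u (x, y) * w x) has_real_derivative py u (x, y') * w x) (at y' within {0..d})"
        by (rule has_field_derivative_at_within)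
    next
      fix y' assume "y' \<in> {0..d}"
      then show "(\<lambda>x. u (x, y') * w x) integrable_on cbox 0 c"
        using cint[OF cont(1)] by (simp add: cbox_interval)
    next
      show "continuous_on ({0..d} \<times> cbox 0 c) (\<lambda>(y, x). py u (x, y) * w x)"
        by (rule cpar[OF cont(3)])
    qed (use y in auto)
    then show "((\<lambda>y. integral {0..c} (\<lambda>x. u (x, y) * w x)) has_real_derivative
           integral {0..c} (\<lambda>x. py u (x, y) * w x)) (at y within {0..d})"
      by (simp add: cbox_interval)
    have "((\<lambda>y. integral (cbox 0 c) (\<lambda>x. py u (x, y) * w x)) has_real_derivative
           integral (cbox 0 c) (\<lambda>x. py (py u) (x, y) * w x)) (at y within {0..d})"
    proof (rule leibniz_rule_field_derivative[where fx = "\<lambda>y x. py (py u) (x, y) * w x"])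
      fix y' x assume "y' \<in> {0..d}" "x \<in> cbox 0 c"
      then have "(x, y') \<in> S" using sub by (auto simp: cbox_interval)
      from DERIV_cmult_right[OF dyy[OF this], of "w x"]
      show "((\<lambda>y. py u (x, y) * w x) has_real_derivative py (py u) (x, y') * w x) (at y' within {0..d})"
        by (rule has_field_derivative_at_within)
    next
      fix y' assume "y' \<in> {0..d}"
      then show "(\<lambda>x. py u (x, y') * w x) integrable_on cbox 0 c"
        using cint[OF cont(3)] by (simp add: cbox_interval)
    next
      show "continuous_on ({0..d} \<times> cbox 0 c) (\<lambda>(y, x). py (py u) (x, y) * w x)"
        by (rule cpar[OF cont(5)])
    qed (use y in auto)
    then have D2: "((\<lambda>y. integral {0..c} (\<lambda>x. py u (x, y) * w x)) has_real_derivative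
           integral {0..c} (\<lambda>x. py (py u) (x, y) * w x)) (at y within {0..d})"
      by (simp add: cbox_interval)
    define I1 where "I1 = integral {0..c} (\<lambda>x. u (x, y) * w x)"
    define I2 where "I2 = integral {0..c} (\<lambda>x. px (px u) (x, y) * w x)"
    have i1: "(\<lambda>x. u (x, y) * w x) integrable_on {0..c}" by (rule cint[OF cont(1) y])
    have i2: "(\<lambda>x. px (px u) (x, y) * w x) integrable_on {0..c}" by (rule cint[OF cont(4) y])
    have "integral {0..c} (\<lambda>x. py (py u) (x, y) * w x)
        = integral {0..c} (\<lambda>x. (- lam) * (u (x, y) * w x) - px (px u) (x, y) * w x)"
    proof (rule integral_cong)
      fix x assume "x \<in> {0..c}"
      from pde[OF this y] have "py (py u) (x, y) = - lam * u (x, y) - px (px u) (x, y)" by linarith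
      then show "py (py u) (x, y) * w x = (- lam) * (u (x, y) * w x) - px (px u) (x, y) * w x"
        by (subst (1) \<open>py (py u) (x, y) = _\<close>) (simp add: algebra_simps)
    qed
    also have "\<dots> = (- lam) * I1 - I2"
      unfolding I1_def I2_def
      by (rule integral_unique, rule has_integral_diff[OF has_integral_mult_right[OF integrable_integral[OF i1]] integrable_integral[OF i2]])
    finally have e1: "integral {0..c} (\<lambda>x. py (py u) (x, y) * w x) = (- lam) * I1 - I2" .
    have "\<And>x. x \<in> {0..c} \<Longrightarrow> ((\<lambda>x. px u (x, y) * w x - u (x, y) * w' x) has_real_derivative
             px (px u) (x, y) * w x + nu^2 * (u (x, y) * w x)) (at x within {0..c})"
    proof -
      fix x assume "x \<in> {0..c}"
      then have xy: "(x, y) \<in> S" using y sub by auto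
      show "((\<lambda>x. px u (x, y) * w x - u (x, y) * w' x) has_real_derivative
             px (px u) (x, y) * w x + nu^2 * (u (x, y) * w x)) (at x within {0..c})"
      proof (rule has_field_derivative_at_within)
        have "((\<lambda>x. px u (x, y) * w x - u (x, y) * w' x) has_real_derivative
             (px (px u) (x, y) * w x + w' x * px u (x, y)) - (px u (x, y) * w' x + (- (nu^2) * w x) * u (x, y))) (at x)"
          by (intro DERIV_diff DERIV_mult dxx[OF xy] dx[OF xy] wd w'd)
        then show "((\<lambda>x. px u (x, y) * w x - u (x, y) * w' x) has_real_derivative
             px (px u) (x, y) * w x + nu^2 * (u (x, y) * w x)) (at x)"
          by (rule DERIV_cong) (simp add: algebra_simps)
      qed
    qed
    from ftc_real(1)[OF _ this] c_pos bc[OF y]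
    have "integral {0..c} (\<lambda>x. px (px u) (x, y) * w x + nu^2 * (u (x, y) * w x)) = 0" by simp
    moreover have "integral {0..c} (\<lambda>x. px (px u) (x, y) * w x + nu^2 * (u (x, y) * w x)) = I2 + nu^2 * I1"
      unfolding I1_def I2_def
      by (rule integral_unique, rule has_integral_add[OF integrable_integral[OF i2] has_integral_mult_right[OF integrable_integral[OF i1]]])
    ultimately have e2: "I2 + nu^2 * I1 = 0" by simp
    show "((\<lambda>y. integral {0..c} (\<lambda>x. py u (x, y) * w x)) has_real_derivative
           - (lam - nu\<^sup>2) * integral {0..c} (\<lambda>x. u (x, y) * w x)) (at y within {0..d})"
    proof -
      have "I2 = - (nu^2 * I1)" using e2 by linarith
      then have val: "(- lam) * I1 - I2 = - (lam - nu^2) * I1" by (simp add: algebra_simps)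
      show ?thesis using D2 unfolding e1 unfolding val unfolding I1_def .
    qed
  qed
qed

lemma swapped: "rect d c lam (u \<circ> prod.swap) (prod.swap ` S)"
proof
  show "0 < d" "0 < c" by (rule d_pos, rule c_pos)
  show "open (prod.swap ` S)" by (rule open_swap[OF openS])
  show "{0..d} \<times> {0..c} \<subseteq> prod.swap ` S"
  proof
    fix p assume "p \<in> {0..d} \<times> {0..c}"
    then obtain a b where p: "p = (a, b)" "a \<in> {0..d}" "b \<in> {0..c}" by auto
    then have "(b, a) \<in> S" using sub by auto
    then show "p \<in> prod.swap ` S" unfolding p by (rule image_eqI[rotated]) simp
  qed
  show "C2_on (prod.swap ` S) (u \<circ> prod.swap)" by (rule C2_swap[OF C2])
  fix x y assume "x \<in> {0..d}" "y \<in> {0..c}"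
  then show "px (px (u \<circ> prod.swap)) (x, y) + py (py (u \<circ> prod.swap)) (x, y) = - lam * (u \<circ> prod.swap) (x, y)"
    using pde[of y x] unfolding px_swap py_swap by (simp add: add.commute)
qed

definition "xbc \<longleftrightarrow> (\<forall>y\<in>{0..d}. u (0, y) = u (c, y) \<and> px u (0, y) = px u (c, y)) \<or>
                   (\<forall>y\<in>{0..d}. px u (0, y) = 0 \<and> px u (c, y) = 0)"
definition "ybc \<longleftrightarrow> (\<forall>x\<in>{0..c}. u (x, 0) = u (x, d) \<and> py u (x, 0) = py u (x, d)) \<or>
                   (\<forall>x\<in>{0..c}. py u (x, 0) = 0 \<and> py u (x, d) = 0)"

lemma swapped_bc: "rect.xbc d c (u \<circ> prod.swap) \<longleftrightarrow> ybc" "rect.ybc d c (u \<circ> prod.swap) \<longleftrightarrow> xbc"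
proof -
  interpret R2: rect d c lam "u \<circ> prod.swap" "prod.swap ` S" by (rule swapped)
  show "R2.xbc \<longleftrightarrow> ybc" "R2.ybc \<longleftrightarrow> xbc"
    unfolding R2.xbc_def R2.ybc_def xbc_def ybc_def px_swap py_swap by auto
qed

lemma mom_bc:
  assumes "ybc"
  shows "bcond d (\<lambda>y. integral {0..c} (\<lambda>x. u (x, y) * w x)) (\<lambda>y. integral {0..c} (\<lambda>x. py u (x, y) * w x))"
  using assms unfolding ybc_def bcond_def
proof
  assume h: "\<forall>x\<in>{0..c}. u (x, 0) = u (x, d) \<and> py u (x, 0) = py u (x, d)"
  have "integral {0..c} (\<lambda>x. u (x, 0) * w x) = integral {0..c} (\<lambda>x. u (x, d) * w x)"
    using h by (intro integral_cong) auto
  moreover have "integral {0..c} (\<lambda>x. py u (x, 0) * w x) = integral {0..c} (\<lambda>x. py u (x, d) * w x)"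
    using h by (intro integral_cong) auto
  ultimately show "(integral {0..c} (\<lambda>x. u (x, 0) * w x) = integral {0..c} (\<lambda>x. u (x, d) * w x) \<and>
     integral {0..c} (\<lambda>x. py u (x, 0) * w x) = integral {0..c} (\<lambda>x. py u (x, d) * w x)) \<or>
    (integral {0..c} (\<lambda>x. py u (x, 0) * w x) = 0 \<and> integral {0..c} (\<lambda>x. py u (x, d) * w x) = 0)"
    by blast
next
  assume h: "\<forall>x\<in>{0..c}. py u (x, 0) = 0 \<and> py u (x, d) = 0"
  have "integral {0..c} (\<lambda>x. py u (x, 0) * w x) = integral {0..c} (\<lambda>x. 0)"
    using h by (intro integral_cong) auto
  moreover have "integral {0..c} (\<lambda>x. py u (x, d) * w x) = integral {0..c} (\<lambda>x. 0)"
    using h by (intro integral_cong) auto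
  ultimately show "(integral {0..c} (\<lambda>x. u (x, 0) * w x) = integral {0..c} (\<lambda>x. u (x, d) * w x) \<and>
     integral {0..c} (\<lambda>x. py u (x, 0) * w x) = integral {0..c} (\<lambda>x. py u (x, d) * w x)) \<or>
    (integral {0..c} (\<lambda>x. py u (x, 0) * w x) = 0 \<and> integral {0..c} (\<lambda>x. py u (x, d) * w x) = 0)"
    by simp
qed

lemma mom_cos:
  assumes "xbc" "cos (nu * c) = 1"
  shows "ode2 d (lam - nu^2) (\<lambda>y. integral {0..c} (\<lambda>x. u (x, y) * cos (nu * x)))
                             (\<lambda>y. integral {0..c} (\<lambda>x. py u (x, y) * cos (nu * x)))"
proof (rule moment[where w' = "\<lambda>x. - (nu * sin (nu * x))"])
  show "\<And>x. ((\<lambda>x. cos (nu * x)) has_real_derivative - (nu * sin (nu * x))) (at x)"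
    by (auto intro!: derivative_eq_intros)
  show "\<And>x. ((\<lambda>x. - (nu * sin (nu * x))) has_real_derivative - (nu\<^sup>2) * cos (nu * x)) (at x)"
    by (auto intro!: derivative_eq_intros simp: power2_eq_square)
  have s: "sin (nu * c) = 0" using assms(2) sin_cos_squared_add[of "nu * c"] by simp
  fix y assume y: "y \<in> {0..d}"
  show "px u (c, y) * cos (nu * c) - u (c, y) * - (nu * sin (nu * c)) =
        px u (0, y) * cos (nu * 0) - u (0, y) * - (nu * sin (nu * 0))"
    using assms(1) y unfolding xbc_def s assms(2) by auto
qed

end



lemma cos_mult_one:
  assumes "cos t = 1"
  shows "cos (real j * t) = 1" "sin (real j * t) = 0"
proof -
  obtain n :: int where n: "t = of_int n * 2 * pi" using assms cos_one_2pi_int by blast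
  have e: "real j * t = 2 * pi * of_int (int j * n)" unfolding n by simp
  show "cos (real j * t) = 1" unfolding e by (rule cos_int_2pin)
  show "sin (real j * t) = 0" unfolding e by (metis sin_int_2pin)
qed

lemma int_cos_zero:
  assumes "a > 0" "w > 0" "cos (w * a) = 1" "j \<ge> 1"
  shows "integral {0..a} (\<lambda>x. cos (real j * w * x)) = 0"
proof -
  have jw: "real j * w > 0" using assms by simp
  have "\<And>x. x \<in> {0..a} \<Longrightarrow> ((\<lambda>x. sin (real j * w * x) / (real j * w)) has_real_derivative
          cos (real j * w * x)) (at x within {0..a})"
    using jw assms(4) by (auto intro!: derivative_eq_intros)
  from ftc_real(1)[OF _ this] assms(1)
  have "integral {0..a} (\<lambda>x. cos (real j * w * x)) = sin (real j * w * a) / (real j * w)" by simp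
  also have "sin (real j * w * a) = 0" using cos_mult_one(2)[OF assms(3), of j] by (simp add: mult.assoc)
  finally show ?thesis by simp
qed

lemma kernel_expand:
  fixes t :: real
  shows "(\<Sum>k\<le>N. (-1)^k * cos (real k * t))\<^sup>2 + (\<Sum>k\<le>N. (-1)^k * sin (real k * t))\<^sup>2
       = (\<Sum>j\<le>N. \<Sum>k\<le>N. (-1)^(j+k) * cos ((real j - real k) * t))"
proof -
  have "(\<Sum>k\<le>N. (-1)^k * cos (real k * t))\<^sup>2 + (\<Sum>k\<le>N. (-1)^k * sin (real k * t))\<^sup>2
      = (\<Sum>j\<le>N. \<Sum>k\<le>N. ((-1)^j * cos (real j * t)) * ((-1)^k * cos (real k * t)))
        + (\<Sum>j\<le>N. \<Sum>k\<le>N. ((-1)^j * sin (real j * t)) * ((-1)^k * sin (real k * t)))"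
    unfolding power2_eq_square sum_product ..
  also have "\<dots> = (\<Sum>j\<le>N. \<Sum>k\<le>N. ((-1)^j * cos (real j * t)) * ((-1)^k * cos (real k * t))
        + ((-1)^j * sin (real j * t)) * ((-1)^k * sin (real k * t)))"
    by (simp add: sum.distrib)
  also have "\<dots> = (\<Sum>j\<le>N. \<Sum>k\<le>N. (-1)^(j+k) * cos ((real j - real k) * t))"
    by (intro sum.cong refl) (simp add: left_diff_distrib cos_diff power_add algebra_simps)
  finally show ?thesis .
qed

definition vv :: "real \<Rightarrow> real \<Rightarrow> nat \<Rightarrow> nat \<Rightarrow> real" where
  "vv A B j k = (if j = k then A else if j = Suc k \<or> k = Suc j then B else 0)"

lemma vv_count: "(\<Sum>j\<le>N. \<Sum>k\<le>N. vv A B j k) = real (N+1) * A + 2 * real N * B"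
proof (induction N)
  case 0
  then show ?case by (simp add: vv_def)
next
  case (Suc N)
  have r: "(\<Sum>k\<le>N. vv A B (Suc N) k) = B"
  proof -
    have "(\<Sum>k\<le>N. vv A B (Suc N) k) = (\<Sum>k\<le>N. if k = N then B else 0)"
      by (intro sum.cong refl) (auto simp: vv_def)
    then show ?thesis by simp
  qed
  have c: "(\<Sum>j\<le>N. vv A B j (Suc N)) = B"
  proof -
    have "(\<Sum>j\<le>N. vv A B j (Suc N)) = (\<Sum>j\<le>N. if j = N then B else 0)"
      by (intro sum.cong refl) (auto simp: vv_def)
    then show ?thesis by simp
  qed
  have "(\<Sum>j\<le>Suc N. \<Sum>k\<le>Suc N. vv A B j k)
      = (\<Sum>j\<le>N. \<Sum>k\<le>N. vv A B j k) + (\<Sum>j\<le>N. vv A B j (Suc N))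
        + (\<Sum>k\<le>N. vv A B (Suc N) k) + vv A B (Suc N) (Suc N)"
    by (simp add: sum.distrib)
  also have "\<dots> = real (N+1) * A + 2 * real N * B + B + B + A"
    using Suc.IH r c by (simp add: vv_def)
  finally show ?case by (simp add: algebra_simps)
qed

lemma integral_cmult_real: "integral S (\<lambda>x. c * f x) = c * integral S (f :: 'a::euclidean_space \<Rightarrow> real)"
  using integral_cmul[where c=c and f=f and S=S] by simp

lemma term_int:
  assumes hz: "\<And>j. j \<ge> 2 \<Longrightarrow> integral {0..a} (\<lambda>x. H x * cos (real j * w * x)) = 0"
  shows "integral {0..a} (\<lambda>x. H x * ((-1)^(j+k) * cos ((real j - real k) * (w * x))))
       = vv (integral {0..a} H) (- integral {0..a} (\<lambda>x. H x * cos (w * x))) j k"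
proof -
  have eq: "(\<lambda>x. H x * ((-1)^(j+k) * cos ((real j - real k) * (w * x))))
          = (\<lambda>x. (-1)^(j+k) * (H x * cos ((real j - real k) * (w * x))))"
    by (simp add: algebra_simps)
  consider "j = k" | "j = Suc k" | "k = Suc j" | "j \<ge> k + 2" | "k \<ge> j + 2" by linarith
  then show ?thesis
  proof cases
    case 1
    then have "j + k = 2 * k" by simp
    then have "(-1::real)^(j+k) = 1" by (simp add: power_mult)
    then show ?thesis using 1 unfolding eq integral_cmult_real by (simp add: vv_def)
  next
    case 2
    then have "(-1::real)^(j+k) = -1" by simp
    then show ?thesis using 2 unfolding eq integral_cmult_real by (simp add: vv_def)
  next
    case 3
    then have "(-1::real)^(j+k) = -1" by simp
    moreover have "(real j - real k) = -1" using 3 by simp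
    ultimately show ?thesis using 3 unfolding eq integral_cmult_real by (simp add: vv_def)
  next
    case 4
    then have e: "real j - real k = real (j - k)" by simp
    have "(\<lambda>x. H x * cos ((real j - real k) * (w * x))) = (\<lambda>x. H x * cos (real (j - k) * w * x))"
      unfolding e by (simp only: mult.assoc)
    moreover have "integral {0..a} (\<lambda>x. H x * cos (real (j - k) * w * x)) = 0"
      using 4 by (intro hz) simp
    ultimately show ?thesis using 4 unfolding eq integral_cmult_real by (simp add: vv_def)
  next
    case 5
    then have e: "real j - real k = - real (k - j)" by simp
    have "(\<lambda>x. H x * cos ((real j - real k) * (w * x))) = (\<lambda>x. H x * cos (real (k - j) * w * x))"
      unfolding e by (simp only: mult.assoc mult_minus_left cos_minus)
    moreover have "integral {0..a} (\<lambda>x. H x * cos (real (k - j) * w * x)) = 0"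
      using 5 by (intro hz) simp
    ultimately show ?thesis using 5 unfolding eq integral_cmult_real by (simp add: vv_def)
  qed
qed

lemma kernel_int:
  assumes cH: "continuous_on {0..a} H"
    and hz: "\<And>j. j \<ge> 2 \<Longrightarrow> integral {0..a} (\<lambda>x. H x * cos (real j * w * x)) = 0"
  shows "integral {0..a} (\<lambda>x. H x * (\<Sum>j\<le>N. \<Sum>k\<le>N. (-1)^(j+k) * cos ((real j - real k) * (w * x))))
       = real (N+1) * integral {0..a} H + 2 * real N * (- integral {0..a} (\<lambda>x. H x * cos (w * x)))"
proof -
  have int: "(\<lambda>x. H x * ((-1)^(j+k) * cos ((real j - real k) * (w * x)))) integrable_on {0..a}" for j k
    by (intro integrable_continuous_interval continuous_intros cH)
  have "integral {0..a} (\<lambda>x. H x * (\<Sum>j\<le>N. \<Sum>k\<le>N. (-1)^(j+k) * cos ((real j - real k) * (w * x))))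
      = integral {0..a} (\<lambda>x. \<Sum>j\<le>N. \<Sum>k\<le>N. H x * ((-1)^(j+k) * cos ((real j - real k) * (w * x))))"
    by (simp add: sum_distrib_left)
  also have "\<dots> = (\<Sum>j\<le>N. integral {0..a} (\<lambda>x. \<Sum>k\<le>N. H x * ((-1)^(j+k) * cos ((real j - real k) * (w * x)))))"
    by (intro integral_sum) (auto intro!: integrable_sum int)
  also have "\<dots> = (\<Sum>j\<le>N. \<Sum>k\<le>N. integral {0..a} (\<lambda>x. H x * ((-1)^(j+k) * cos ((real j - real k) * (w * x)))))"
    by (intro sum.cong refl integral_sum) (auto intro!: int)
  also have "\<dots> = (\<Sum>j\<le>N. \<Sum>k\<le>N. vv (integral {0..a} H) (- integral {0..a} (\<lambda>x. H x * cos (w * x))) j k)"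
    by (intro sum.cong refl term_int hz)
  also have "\<dots> = real (N+1) * integral {0..a} H + 2 * real N * (- integral {0..a} (\<lambda>x. H x * cos (w * x)))"
    by (rule vv_count)
  finally show ?thesis .
qed

lemma fejer:
  assumes a: "a > 0" and w: "w > 0" and cw: "cos (w * a) = 1"
    and cG: "continuous_on {0..a} G" and m: "m > 0" and Gm: "\<And>x. x \<in> {0..a} \<Longrightarrow> m \<le> G x"
    and hz: "\<And>j. j \<ge> 2 \<Longrightarrow> integral {0..a} (\<lambda>x. G x * cos (real j * w * x)) = 0"
  shows "2 * integral {0..a} (\<lambda>x. G x * cos (w * x)) < integral {0..a} G"
proof -
  define A where "A = integral {0..a} G"
  define C where "C = integral {0..a} (\<lambda>x. G x * cos (w * x))"
  define T where "T N x = (\<Sum>j\<le>N. \<Sum>k\<le>N. (-1)^(j+k) * cos ((real j - real k) * (w * x)))" for N x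
  have Tnn: "T N x \<ge> 0" for N x
    unfolding T_def kernel_expand[symmetric] by simp
  have cT: "continuous_on {0..a} (T N)" for N
    unfolding T_def by (intro continuous_intros)
  have GT: "integral {0..a} (\<lambda>x. G x * T N x) = real (N+1) * A + 2 * real N * (- C)" for N
    unfolding T_def A_def C_def by (rule kernel_int[OF cG hz])
  have hz1: "integral {0..a} (\<lambda>x. 1 * cos (real j * w * x)) = 0" if "j \<ge> 2" for j
    using int_cos_zero[OF a w cw, of j] that by simp
  have c1: "integral {0..a} (\<lambda>x. 1 * cos (w * x)) = 0"
    using int_cos_zero[OF a w cw, of 1] by simp
  have "integral {0..a} (\<lambda>x. 1 * T N x) = real (N+1) * integral {0..a} (\<lambda>x. 1) + 2 * real N * (- 0)" for N
    unfolding T_def by (subst c1[symmetric], rule kernel_int[OF _ hz1]) (auto intro: continuous_intros)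
  then have IT: "integral {0..a} (T N) = real (N+1) * a" for N
    using a by simp
  have low: "real (N+1) * A - 2 * real N * C \<ge> m * (real (N+1) * a)" for N
  proof -
    have "integral {0..a} (\<lambda>x. m * T N x) \<le> integral {0..a} (\<lambda>x. G x * T N x)"
    proof (rule integral_le)
      show "(\<lambda>x. m * T N x) integrable_on {0..a}"
        by (intro integrable_continuous_interval continuous_intros cT)
      show "(\<lambda>x. G x * T N x) integrable_on {0..a}"
        by (intro integrable_continuous_interval continuous_intros cT cG)
      fix x assume "x \<in> {0..a}"
      then show "m * T N x \<le> G x * T N x"
        using Gm Tnn by (intro mult_right_mono) auto
    qed
    then show ?thesis unfolding GT integral_cmult_real IT by simp
  qed
  obtain n :: nat where n: "2 * \<bar>C\<bar> / (m * a) < real n"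
    using reals_Archimedean2 by blast
  have ma: "m * a > 0" using m a by simp
  have "2 * \<bar>C\<bar> < real n * (m * a)" using n ma by (simp add: field_simps)
  also have "\<dots> \<le> real (n+1) * (m * a)" using ma by (intro mult_right_mono) auto
  finally have big: "2 * C < m * (real (n+1) * a)" by (simp add: algebra_simps)
  have "real (n+1) * (A - 2 * C) = (real (n+1) * A - 2 * real n * C) - 2 * C"
    by (simp add: algebra_simps)
  also have "\<dots> > 0" using low[of n] big by linarith
  finally have "real (n+1) * (A - 2 * C) > 0" .
  then have "A - 2 * C > 0" by (simp add: zero_less_mult_iff)
  then show ?thesis unfolding A_def C_def by simp
qed



lemma pos_min:
  fixes g :: "real \<Rightarrow> real"
  assumes "a \<le> b" "continuous_on {a..b} g" "\<And>x. x \<in> {a..b} \<Longrightarrow> g x > 0"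
  shows "\<exists>m>0. \<forall>x\<in>{a..b}. m \<le> g x"
proof -
  obtain x0 where "x0 \<in> {a..b}" "\<forall>y\<in>{a..b}. g x0 \<le> g y"
    using continuous_attains_inf[of "{a..b}" g] assms by auto
  then show ?thesis using assms(3) by blast
qed

lemma int_pos:
  fixes g :: "real \<Rightarrow> real"
  assumes "a < b" "continuous_on {a..b} g" "\<And>x. x \<in> {a..b} \<Longrightarrow> g x > 0"
  shows "integral {a..b} g > 0"
proof -
  obtain m where m: "m > 0" "\<forall>x\<in>{a..b}. m \<le> g x"
    using pos_min[of a b g] assms by force
  have "integral {a..b} (\<lambda>x. m) \<le> integral {a..b} g"
    using m assms by (intro integral_le integrable_continuous_interval) (auto intro: continuous_intros)
  moreover have "integral {a..b} (\<lambda>x. m) = (b - a) * m" using assms(1) by simp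
  moreover have "(b - a) * m > 0" using assms(1) m by simp
  ultimately show ?thesis by linarith
qed

lemma trig_int:
  fixes a w P Q :: real
  assumes a: "a > 0" and w: "w > 0" and cw: "cos (w * a) = 1"
  shows "integral {0..a} (\<lambda>x. (P * cos (w * x) + Q * sin (w * x)) * cos (w * x)) = P * a / 2"
proof -
  define F where "F x = P * (x * inverse 2 + sin (w * x) * cos (w * x) * inverse (2 * w)) + Q * (sin (w * x) * sin (w * x)) * inverse (2 * w)" for x
  have ss: "sin (w * x) * sin (w * x) = 1 - cos (w * x) * cos (w * x)" for x
    using sin_cos_squared_add[of "w * x"] by (simp add: power2_eq_square)
  have D: "(F has_real_derivative (P * cos (w * x) + Q * sin (w * x)) * cos (w * x)) (at x within {0..a})" for x
    unfolding F_def[abs_def]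
    by (rule DERIV_cong, (rule derivative_intros)+) (use w in \<open>simp add: field_simps ss\<close>)
  have s1: "sin (w * a) = 0" using cos_mult_one(2)[OF cw, of 1] by simp
  from ftc_real(1)[of 0 a F, OF _ D] a
  show ?thesis unfolding F_def using s1 by (simp add: field_simps)
qed

context rect
begin

lemma bot_int_pos:
  assumes "\<And>x. x \<in> {0..c} \<Longrightarrow> u (x, y) > 0" "y \<in> {0..d}"
  shows "integral {0..c} (\<lambda>x. u (x, y)) > 0"
  using int_pos[OF c_pos cx[OF cont(1) assms(2)]] assms by auto

lemma H1:
  assumes xbc ybc "lam > 0" and bot: "\<And>x. x \<in> {0..c} \<Longrightarrow> u (x, 0) > 0"
    and top: "\<And>x. x \<in> {0..c} \<Longrightarrow> u (x, d) > 0"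
  shows "cos (sqrt lam * d) = 1"
proof -
  have o: "ode2 d (lam - 0^2) (\<lambda>y. integral {0..c} (\<lambda>x. u (x, y) * cos (0 * x)))
                             (\<lambda>y. integral {0..c} (\<lambda>x. py u (x, y) * cos (0 * x)))"
    by (rule mom_cos[OF assms(1)]) simp
  have e: "lam - 0^2 = (sqrt lam)^2" using assms(3) by simp
  show ?thesis
  proof (rule ode_pos_cos[OF _ d_pos o[unfolded e] mom_bc[OF assms(2)]])
    show "sqrt lam > 0" using assms(3) by simp
    show "integral {0..c} (\<lambda>x. u (x, 0) * cos (0 * x)) > 0"
      using bot_int_pos[of 0] bot d_pos by simp
    show "integral {0..c} (\<lambda>x. u (x, d) * cos (0 * x)) > 0"
      using bot_int_pos[of d] top d_pos by simp
  qed
qed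

lemma H2:
  assumes xbc "lam > 0"
  shows "\<exists>B. \<forall>y\<in>{0..d}. integral {0..c} (\<lambda>x. u (x, y)) =
            integral {0..c} (\<lambda>x. u (x, 0)) * cos (sqrt lam * y) + B * sin (sqrt lam * y)"
proof -
  have o: "ode2 d (lam - 0^2) (\<lambda>y. integral {0..c} (\<lambda>x. u (x, y) * cos (0 * x)))
                             (\<lambda>y. integral {0..c} (\<lambda>x. py u (x, y) * cos (0 * x)))"
    by (rule mom_cos[OF assms(1)]) simp
  have e: "lam - 0^2 = (sqrt lam)^2" using assms(2) by simp
  have sl: "sqrt lam > 0" using assms(2) by simp
  show ?thesis
  proof (rule exI[of _ "integral {0..c} (\<lambda>x. py u (x, 0) * cos (0 * x)) / sqrt lam"], intro ballI)
    fix y assume y: "y \<in> {0..d}"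
    show "integral {0..c} (\<lambda>x. u (x, y)) = integral {0..c} (\<lambda>x. u (x, 0)) * cos (sqrt lam * y) +
        integral {0..c} (\<lambda>x. py u (x, 0) * cos (0 * x)) / sqrt lam * sin (sqrt lam * y)"
      using ode_pos(1)[OF sl o[unfolded e] y] by (simp only: mult_zero_left cos_zero mult_1_right)
  qed
qed

lemma H3:
  assumes xbc ybc "lam > 0" "cos (sqrt lam * c) = 1" "j \<ge> 2"
  shows "integral {0..c} (\<lambda>x. u (x, 0) * cos (real j * sqrt lam * x)) = 0"
proof -
  have cc: "cos ((real j * sqrt lam) * c) = 1"
    using cos_mult_one(1)[OF assms(4), of j] by (simp add: mult.assoc)
  have o: "ode2 d (lam - (real j * sqrt lam)^2)
             (\<lambda>y. integral {0..c} (\<lambda>x. u (x, y) * cos ((real j * sqrt lam) * x)))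
             (\<lambda>y. integral {0..c} (\<lambda>x. py u (x, y) * cos ((real j * sqrt lam) * x)))"
    by (rule mom_cos[OF assms(1) cc])
  have "(real j * sqrt lam)^2 = real j ^ 2 * lam" using assms(3) by (simp add: power_mult_distrib)
  moreover have "real j \<ge> 2" using assms(5) by simp
  then have "real j ^ 2 \<ge> 2 ^ 2" by (rule power_mono) simp
  then have "real j ^ 2 * lam \<ge> 4 * lam" using assms(3) by (intro mult_right_mono) auto
  ultimately have neg: "lam - (real j * sqrt lam)^2 < 0" using assms(3) by linarith
  from ode_neg[OF d_pos o neg mom_bc[OF assms(2)]] show ?thesis .
qed

lemma H4:
  assumes xbc ybc "lam > 0" "cos (sqrt lam * c) = 1"
  shows "\<forall>y\<in>{0..d}. integral {0..c} (\<lambda>x. u (x, y) * cos (sqrt lam * x)) =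
                     integral {0..c} (\<lambda>x. u (x, 0) * cos (sqrt lam * x))"
proof -
  have o: "ode2 d (lam - (sqrt lam)^2)
             (\<lambda>y. integral {0..c} (\<lambda>x. u (x, y) * cos (sqrt lam * x)))
             (\<lambda>y. integral {0..c} (\<lambda>x. py u (x, y) * cos (sqrt lam * x)))"
    by (rule mom_cos[OF assms(1) assms(4)])
  have e: "lam - (sqrt lam)^2 = 0" using assms(3) by simp
  from ode_zero[OF d_pos o[unfolded e] mom_bc[OF assms(2)]] show ?thesis .
qed

end



lemma integral_multr: "integral S (\<lambda>x. f x * c) = integral S (f :: 'a::euclidean_space \<Rightarrow> real) * c"
  using integral_cmult_real[of S c f] by (simp add: mult.commute)

context rect
begin

lemma X3:
  assumes "lam > 0" "cos (sqrt lam * c) = 1"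
    and H4: "\<forall>y\<in>{0..d}. integral {0..c} (\<lambda>x. u (x, y) * cos (sqrt lam * x)) =
                     integral {0..c} (\<lambda>x. u (x, 0) * cos (sqrt lam * x))"
    and N: "\<forall>x\<in>{0..c}. integral {0..d} (\<lambda>y. u (x, y)) = A' * cos (sqrt lam * x) + B' * sin (sqrt lam * x)"
  shows "d * integral {0..c} (\<lambda>x. u (x, 0) * cos (sqrt lam * x)) = A' * c / 2"
proof -
  define w where "w = sqrt lam"
  have w: "w > 0" unfolding w_def using assms(1) by simp
  define Cx where "Cx = integral {0..c} (\<lambda>x. u (x, 0) * cos (w * x))"
  have "integral {0..d} (\<lambda>y. integral {0..c} (\<lambda>x. u (x, y) * cos (w * x))) = integral {0..d} (\<lambda>y. Cx)"
  proof (rule integral_cong)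
    fix y assume "y \<in> {0..d}"
    then show "integral {0..c} (\<lambda>x. u (x, y) * cos (w * x)) = Cx"
      using H4 unfolding w_def Cx_def by blast
  qed
  also have "\<dots> = d * Cx" using d_pos by simp
  finally have e1: "integral {0..d} (\<lambda>y. integral {0..c} (\<lambda>x. u (x, y) * cos (w * x))) = d * Cx" .
  have cont2: "continuous_on (cbox (0, 0) (c, d)) (\<lambda>(x, y). u (x, y) * cos (w * x))"
  proof -
    have "continuous_on ({0..c} \<times> {0..d}) (\<lambda>p. u p * cos (w * fst p))"
      by (intro continuous_intros continuous_on_subset[OF cont(1) sub])
    then show ?thesis unfolding cbox_Pair_eq by (simp add: cbox_interval case_prod_unfold)
  qed
  have "integral (cbox 0 c) (\<lambda>x. integral (cbox 0 d) (\<lambda>y. u (x, y) * cos (w * x)))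
      = integral (cbox 0 d) (\<lambda>y. integral (cbox 0 c) (\<lambda>x. u (x, y) * cos (w * x)))"
    using integral_swap_continuous[OF cont2] by simp
  then have e2: "integral {0..c} (\<lambda>x. integral {0..d} (\<lambda>y. u (x, y) * cos (w * x))) = d * Cx"
    using e1 by (simp add: cbox_interval)
  have "integral {0..c} (\<lambda>x. integral {0..d} (\<lambda>y. u (x, y) * cos (w * x)))
      = integral {0..c} (\<lambda>x. (A' * cos (w * x) + B' * sin (w * x)) * cos (w * x))"
  proof (rule integral_cong)
    fix x assume "x \<in> {0..c}"
    then show "integral {0..d} (\<lambda>y. u (x, y) * cos (w * x)) = (A' * cos (w * x) + B' * sin (w * x)) * cos (w * x)"
      using N unfolding integral_multr w_def by simp
  qed
  also have "\<dots> = A' * c / 2"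
    by (rule trig_int[OF c_pos w]) (use assms(2) in \<open>simp add: w_def\<close>)
  finally show ?thesis using e2 unfolding Cx_def w_def by simp
qed

lemma neg_false:
  assumes xbc ybc "lam < 0" and bot: "\<And>x. x \<in> {0..c} \<Longrightarrow> u (x, 0) > 0"
  shows False
proof -
  have o: "ode2 d (lam - 0^2) (\<lambda>y. integral {0..c} (\<lambda>x. u (x, y) * cos (0 * x)))
                             (\<lambda>y. integral {0..c} (\<lambda>x. py u (x, y) * cos (0 * x)))"
    by (rule mom_cos[OF assms(1)]) simp
  have "lam - 0^2 < 0" using assms(3) by simp
  from ode_neg[OF d_pos o this mom_bc[OF assms(2)]]
  have "integral {0..c} (\<lambda>x. u (x, 0)) = 0" by simp
  moreover have "integral {0..c} (\<lambda>x. u (x, 0)) > 0"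
    using bot_int_pos[of 0] bot d_pos by simp
  ultimately show False by simp
qed

lemma pos_false:
  assumes xbc ybc "lam > 0"
    and bot: "\<And>x. x \<in> {0..c} \<Longrightarrow> u (x, 0) > 0"
    and top: "\<And>x. x \<in> {0..c} \<Longrightarrow> u (x, d) > 0"
    and left: "\<And>y. y \<in> {0..d} \<Longrightarrow> u (0, y) > 0"
    and right: "\<And>y. y \<in> {0..d} \<Longrightarrow> u (c, y) > 0"
  shows False
proof -
  interpret R2: rect d c lam "u \<circ> prod.swap" "prod.swap ` S" by (rule swapped)
  have bc2: "R2.xbc" "R2.ybc" using assms(1,2) swapped_bc by auto
  define w where "w = sqrt lam"
  have w: "w > 0" unfolding w_def using assms(3) by simp
  have cd: "cos (w * d) = 1" unfolding w_def by (rule H1[OF assms(1-3) bot top])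
  have cc: "cos (w * c) = 1" unfolding w_def
    by (rule R2.H1[OF bc2 assms(3)]) (use left right in auto)
  obtain B where M: "\<forall>y\<in>{0..d}. integral {0..c} (\<lambda>x. u (x, y)) =
            integral {0..c} (\<lambda>x. u (x, 0)) * cos (w * y) + B * sin (w * y)"
    using H2[OF assms(1,3)] unfolding w_def by blast
  obtain B' where N: "\<forall>y\<in>{0..c}. integral {0..d} (\<lambda>x. u (y, x)) =
            integral {0..d} (\<lambda>x. u (0, x)) * cos (w * y) + B' * sin (w * y)"
    using R2.H2[OF bc2(1) assms(3)] unfolding w_def by auto
  define A where "A = integral {0..c} (\<lambda>x. u (x, 0))"
  define A' where "A' = integral {0..d} (\<lambda>y. u (0, y))"
  define Cx where "Cx = integral {0..c} (\<lambda>x. u (x, 0) * cos (w * x))"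
  define Cy where "Cy = integral {0..d} (\<lambda>y. u (0, y) * cos (w * y))"
  have x3: "d * Cx = A' * c / 2"
    unfolding Cx_def A'_def w_def
    by (rule X3[OF assms(3) cc[unfolded w_def] H4[OF assms(1-3) cc[unfolded w_def]]])
       (use N[unfolded w_def] in blast)
  have y3: "c * Cy = A * d / 2"
  proof -
    have "c * integral {0..d} (\<lambda>x. (u \<circ> prod.swap) (x, 0) * cos (sqrt lam * x)) = A * d / 2"
      by (rule R2.X3[OF assms(3) cd[unfolded w_def] R2.H4[OF bc2 assms(3) cd[unfolded w_def]]])
         (use M[unfolded w_def, folded A_def] in \<open>simp only: comp_def swap_simp\<close>)
    then show ?thesis unfolding Cy_def w_def by simp
  qed
  obtain m where m: "m > 0" "\<forall>x\<in>{0..c}. m \<le> u (x, 0)"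
    using pos_min[of 0 c "\<lambda>x. u (x, 0)"] c_pos cx[OF cont(1), of 0] d_pos bot by auto
  have fx: "2 * Cx < A"
    unfolding Cx_def A_def
  proof (rule fejer[OF c_pos w cc _ m(1)])
    show "continuous_on {0..c} (\<lambda>x. u (x, 0))" using cx[OF cont(1), of 0] d_pos by simp
    show "\<And>x. x \<in> {0..c} \<Longrightarrow> m \<le> u (x, 0)" using m by auto
    fix j :: nat assume "j \<ge> 2"
    then show "integral {0..c} (\<lambda>x. u (x, 0) * cos (real j * w * x)) = 0"
      unfolding w_def by (rule H3[OF assms(1-3) cc[unfolded w_def]])
  qed
  obtain m' where m': "m' > 0" "\<forall>y\<in>{0..d}. m' \<le> u (0, y)"
    using pos_min[of 0 d "\<lambda>y. u (0, y)"] d_pos cy[OF cont(1), of 0] c_pos left by auto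
  have fy: "2 * Cy < A'"
    unfolding Cy_def A'_def
  proof (rule fejer[OF d_pos w cd _ m'(1)])
    show "continuous_on {0..d} (\<lambda>y. u (0, y))" using cy[OF cont(1), of 0] c_pos by simp
    show "\<And>y. y \<in> {0..d} \<Longrightarrow> m' \<le> u (0, y)" using m' by auto
    fix j :: nat assume j: "j \<ge> 2"
    have "integral {0..d} (\<lambda>x. (u \<circ> prod.swap) (x, 0) * cos (real j * sqrt lam * x)) = 0"
      by (rule R2.H3[OF bc2 assms(3) cd[unfolded w_def] j])
    then show "integral {0..d} (\<lambda>y. u (0, y) * cos (real j * w * y)) = 0"
      unfolding w_def by simp
  qed
  have "A' * c = d * (2 * Cx)" using x3 by simp
  also have "\<dots> < d * A" using fx d_pos by (intro mult_strict_left_mono)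
  finally have i1: "A' * c < d * A" .
  have "A * d = c * (2 * Cy)" using y3 by simp
  also have "\<dots> < c * A'" using fy c_pos by (intro mult_strict_left_mono)
  finally have i2: "A * d < c * A'" .
  from i1 i2 show False by (simp add: algebra_simps)
qed

end



context rect
begin

lemma energy_x:
  assumes xbc "y \<in> {0..d}"
  shows "integral {0..c} (\<lambda>x. px u (x, y) * px u (x, y) + u (x, y) * px (px u) (x, y)) = 0"
proof -
  have "\<And>x. x \<in> {0..c} \<Longrightarrow> ((\<lambda>x. u (x, y) * px u (x, y)) has_real_derivative
          px u (x, y) * px u (x, y) + u (x, y) * px (px u) (x, y)) (at x within {0..c})"
  proof -
    fix x assume "x \<in> {0..c}"
    then have xy: "(x, y) \<in> S" using assms(2) sub by auto
    show "((\<lambda>x. u (x, y) * px u (x, y)) has_real_derivative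
          px u (x, y) * px u (x, y) + u (x, y) * px (px u) (x, y)) (at x within {0..c})"
      by (rule has_field_derivative_at_within, rule DERIV_cong[OF DERIV_mult[OF dx[OF xy] dxx[OF xy]]])
        (simp add: algebra_simps)
  qed
  from ftc_real(1)[OF _ this] c_pos
  have "integral {0..c} (\<lambda>x. px u (x, y) * px u (x, y) + u (x, y) * px (px u) (x, y))
        = u (c, y) * px u (c, y) - u (0, y) * px u (0, y)" by simp
  also have "\<dots> = 0" using assms unfolding xbc_def by auto
  finally show ?thesis .
qed

lemma cpar2: "continuous_on S g \<Longrightarrow> continuous_on ({0..d} \<times> cbox 0 c) (\<lambda>(y, x). g (x, y))"
proof -
  assume g: "continuous_on S g"
  have "prod.swap ` ({0..d} \<times> {0..c}) \<subseteq> S" using sub by auto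
  then have "continuous_on ({0..d} \<times> {0..c}) (g \<circ> prod.swap)"
    by (intro continuous_on_compose continuous_on_swap continuous_on_subset[OF g])
  moreover have "(g \<circ> prod.swap) = (\<lambda>(y, x). g (x, y))" by auto
  ultimately show ?thesis by (simp add: cbox_interval)
qed

lemma zero_grad:
  fixes g :: "real \<times> real \<Rightarrow> real"
  assumes g: "continuous_on S g" and nn: "\<And>p. p \<in> S \<Longrightarrow> g p \<ge> 0"
    and z: "integral {0..d} (\<lambda>y. integral {0..c} (\<lambda>x. g (x, y))) = 0"
  shows "\<forall>x\<in>{0..c}. \<forall>y\<in>{0..d}. g (x, y) = 0"
proof (intro ballI)
  fix x y assume x: "x \<in> {0..c}" and y: "y \<in> {0..d}"
  have cE: "continuous_on {0..d} (\<lambda>y. integral {0..c} (\<lambda>x. g (x, y)))"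
    using integral_continuous_on_param[where f="\<lambda>y x. g (x, y)", OF cpar2[OF g]] by (simp add: cbox_interval)
  have Enn: "integral {0..c} (\<lambda>x. g (x, y')) \<ge> 0" if "y' \<in> {0..d}" for y'
    using that sub by (intro integral_nonneg integrable_continuous_interval cx[OF g]) (auto intro!: nn)
  have "\<forall>y'\<in>{0..d}. integral {0..c} (\<lambda>x. g (x, y')) = 0"
    using integral_eq_0_iff[OF cE d_pos] Enn z by auto
  then have "integral {0..c} (\<lambda>x. g (x, y)) = 0" using y by auto
  moreover have "\<forall>x'\<in>{0..c}. g (x', y) \<ge> 0" using sub y by (auto intro!: nn)
  ultimately have "\<forall>x'\<in>{0..c}. g (x', y) = 0"
    using integral_eq_0_iff[OF cx[OF g y] c_pos] by auto
  then show "g (x, y) = 0" using x by auto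
qed

lemma const_from_grad:
  assumes zx: "\<forall>x\<in>{0..c}. \<forall>y\<in>{0..d}. px u (x, y) = 0"
    and zy: "\<forall>x\<in>{0..c}. \<forall>y\<in>{0..d}. py u (x, y) = 0"
  shows "\<forall>x\<in>{0..c}. \<forall>y\<in>{0..d}. u (x, y) = u (0, 0)"
proof (intro ballI)
  fix x y assume x: "x \<in> {0..c}" and y: "y \<in> {0..d}"
  have "\<And>t. t \<in> {0..x} \<Longrightarrow> ((\<lambda>t. u (t, y)) has_real_derivative px u (t, y)) (at t within {0..x})"
    by (rule has_field_derivative_at_within, rule dx) (use x y sub in auto)
  from ftc_real(1)[OF _ this] x
  have "integral {0..x} (\<lambda>t. px u (t, y)) = u (x, y) - u (0, y)" by simp
  moreover have "integral {0..x} (\<lambda>t. px u (t, y)) = integral {0..x} (\<lambda>t. 0)"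
    using zx x y by (intro integral_cong) auto
  ultimately have e1: "u (x, y) = u (0, y)" by simp
  have "\<And>t. t \<in> {0..y} \<Longrightarrow> ((\<lambda>t. u (0, t)) has_real_derivative py u (0, t)) (at t within {0..y})"
    by (rule has_field_derivative_at_within, rule dy) (use y sub c_pos in auto)
  from ftc_real(1)[OF _ this] y
  have "integral {0..y} (\<lambda>t. py u (0, t)) = u (0, y) - u (0, 0)" by simp
  moreover have "integral {0..y} (\<lambda>t. py u (0, t)) = integral {0..y} (\<lambda>t. 0)"
    using zy y c_pos by (intro integral_cong) auto
  ultimately have "u (0, y) = u (0, 0)" by simp
  with e1 show "u (x, y) = u (0, 0)" by simp
qed

lemma outer_nonneg:
  fixes g :: "real \<times> real \<Rightarrow> real"
  assumes g: "continuous_on S g" and nn: "\<And>p. p \<in> S \<Longrightarrow> g p \<ge> 0"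
  shows "integral {0..d} (\<lambda>y. integral {0..c} (\<lambda>x. g (x, y))) \<ge> 0"
proof -
  have cE: "continuous_on {0..d} (\<lambda>y. integral {0..c} (\<lambda>x. g (x, y)))"
    using integral_continuous_on_param[where f="\<lambda>y x. g (x, y)", OF cpar2[OF g]] by (simp add: cbox_interval)
  have Enn: "integral {0..c} (\<lambda>x. g (x, y')) \<ge> 0" if "y' \<in> {0..d}" for y'
    using that sub by (intro integral_nonneg integrable_continuous_interval cx[OF g]) (auto intro!: nn)
  show ?thesis
    by (rule integral_nonneg[OF integrable_continuous_interval[OF cE]]) (use Enn in auto)
qed

lemma ibp_split:
  fixes f g :: "real \<times> real \<Rightarrow> real"
  assumes "continuous_on S f" "continuous_on S g" "y \<in> {0..d}"
    "integral {0..c} (\<lambda>x. f (x, y) + g (x, y)) = 0"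
  shows "integral {0..c} (\<lambda>x. f (x, y)) = - integral {0..c} (\<lambda>x. g (x, y))"
proof -
  have "integral {0..c} (\<lambda>x. f (x, y) + g (x, y)) = integral {0..c} (\<lambda>x. f (x, y)) + integral {0..c} (\<lambda>x. g (x, y))"
    by (intro integral_add integrable_continuous_interval cx assms)
  then show ?thesis using assms(4) by linarith
qed

lemma zero_case:
  assumes xbc ybc "lam = 0"
  shows "\<forall>x\<in>{0..c}. \<forall>y\<in>{0..d}. u (x, y) = u (0, 0)"
proof -
  interpret R2: rect d c lam "u \<circ> prod.swap" "prod.swap ` S" by (rule swapped)
  have bc2: "R2.xbc" "R2.ybc" using assms(1,2) swapped_bc by auto
  have cuu: "continuous_on S (\<lambda>p. px u p * px u p)" "continuous_on S (\<lambda>p. py u p * py u p)"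
    "continuous_on S (\<lambda>p. u p * px (px u) p)" "continuous_on S (\<lambda>p. u p * py (py u) p)"
    by (intro continuous_intros cont)+
  have ix: "integral {0..c} (\<lambda>x. px u (x, y) * px u (x, y)) = - integral {0..c} (\<lambda>x. u (x, y) * px (px u) (x, y))"
    if "y \<in> {0..d}" for y
    using ibp_split[OF cuu(1) cuu(3) that] energy_x[OF assms(1) that] by simp
  have iy: "integral {0..d} (\<lambda>y. py u (x, y) * py u (x, y)) = - integral {0..d} (\<lambda>y. u (x, y) * py (py u) (x, y))"
    if "x \<in> {0..c}" for x
  proof -
    have e: "integral {0..d} (\<lambda>y. py u (x, y) * py u (x, y) + u (x, y) * py (py u) (x, y)) = 0"
      using R2.energy_x[OF bc2(1) that] by (simp add: px_swap py_swap)
    have "integral {0..d} (\<lambda>y. py u (x, y) * py u (x, y) + u (x, y) * py (py u) (x, y))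
        = integral {0..d} (\<lambda>y. py u (x, y) * py u (x, y)) + integral {0..d} (\<lambda>y. u (x, y) * py (py u) (x, y))"
      by (intro integral_add integrable_continuous_interval cy cuu that)
    then show ?thesis using e by linarith
  qed
  have pu: "integral {0..c} (\<lambda>x. u (x, y) * px (px u) (x, y)) = - integral {0..c} (\<lambda>x. u (x, y) * py (py u) (x, y))"
    if "y \<in> {0..d}" for y
  proof -
    have "integral {0..c} (\<lambda>x. u (x, y) * px (px u) (x, y)) = integral {0..c} (\<lambda>x. - (u (x, y) * py (py u) (x, y)))"
    proof (rule integral_cong)
      fix x assume "x \<in> {0..c}"
      from pde[OF this that] assms(3) have "px (px u) (x, y) = - py (py u) (x, y)" by simp
      then show "u (x, y) * px (px u) (x, y) = - (u (x, y) * py (py u) (x, y))" by simp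
    qed
    then show ?thesis by simp
  qed
  have "integral {0..d} (\<lambda>y. integral {0..c} (\<lambda>x. px u (x, y) * px u (x, y)))
      = integral {0..d} (\<lambda>y. integral {0..c} (\<lambda>x. u (x, y) * py (py u) (x, y)))"
    by (rule integral_cong) (simp add: ix pu)
  also have "\<dots> = integral {0..c} (\<lambda>x. integral {0..d} (\<lambda>y. u (x, y) * py (py u) (x, y)))"
  proof -
    have cont2: "continuous_on (cbox (0, 0) (c, d)) (\<lambda>(x, y). u (x, y) * py (py u) (x, y))"
    proof -
      have "continuous_on ({0..c} \<times> {0..d}) (\<lambda>p. u p * py (py u) p)"
        by (rule continuous_on_subset[OF cuu(4) sub])
      then show ?thesis unfolding cbox_Pair_eq by (simp add: cbox_interval case_prod_unfold)
    qed
    show ?thesis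
      using integral_swap_continuous[where f="\<lambda>x y. u (x, y) * py (py u) (x, y)", OF cont2]
      by (simp add: cbox_interval)
  qed
  also have "\<dots> = integral {0..c} (\<lambda>x. - integral {0..d} (\<lambda>y. py u (x, y) * py u (x, y)))"
    by (rule integral_cong) (simp add: iy)
  also have "\<dots> = - integral {0..c} (\<lambda>x. integral {0..d} (\<lambda>y. py u (x, y) * py u (x, y)))"
    by simp
  finally have sum0: "integral {0..d} (\<lambda>y. integral {0..c} (\<lambda>x. px u (x, y) * px u (x, y)))
       + integral {0..c} (\<lambda>x. integral {0..d} (\<lambda>y. py u (x, y) * py u (x, y))) = 0" by simp
  have n1: "integral {0..d} (\<lambda>y. integral {0..c} (\<lambda>x. px u (x, y) * px u (x, y))) \<ge> 0"
    by (rule outer_nonneg[OF cuu(1)]) simp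
  have n2: "integral {0..c} (\<lambda>x. integral {0..d} (\<lambda>y. py u (x, y) * py u (x, y))) \<ge> 0"
  proof -
    have "integral {0..c} (\<lambda>y. integral {0..d} (\<lambda>x. ((\<lambda>p. py u p * py u p) \<circ> prod.swap) (x, y))) \<ge> 0"
      by (rule R2.outer_nonneg[OF cont_swap[OF cuu(2)]]) simp
    then show ?thesis by simp
  qed
  have z1: "integral {0..d} (\<lambda>y. integral {0..c} (\<lambda>x. px u (x, y) * px u (x, y))) = 0"
    using sum0 n1 n2 by linarith
  have z2: "integral {0..c} (\<lambda>x. integral {0..d} (\<lambda>y. py u (x, y) * py u (x, y))) = 0"
    using sum0 n1 n2 by linarith
  have gx: "\<forall>x\<in>{0..c}. \<forall>y\<in>{0..d}. px u (x, y) * px u (x, y) = 0"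
    using zero_grad[OF cuu(1) _ z1] by simp
  have "\<forall>x\<in>{0..d}. \<forall>y\<in>{0..c}. ((\<lambda>p. py u p * py u p) \<circ> prod.swap) (x, y) = 0"
    by (rule R2.zero_grad[OF cont_swap[OF cuu(2)]]) (use z2 in simp_all)
  then have gy: "\<forall>x\<in>{0..c}. \<forall>y\<in>{0..d}. py u (x, y) * py u (x, y) = 0" by simp
  show ?thesis
    by (rule const_from_grad) (use gx gy in simp_all)
qed

end



context rect
begin

lemma main_const:
  assumes xbc ybc
    and bot: "\<And>x. x \<in> {0..c} \<Longrightarrow> u (x, 0) > 0"
    and top: "\<And>x. x \<in> {0..c} \<Longrightarrow> u (x, d) > 0"
    and left: "\<And>y. y \<in> {0..d} \<Longrightarrow> u (0, y) > 0"
    and right: "\<And>y. y \<in> {0..d} \<Longrightarrow> u (c, y) > 0"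
  shows "\<exists>C>0. \<forall>p\<in>{0..c} \<times> {0..d}. u p = C"
proof -
  consider "lam < 0" | "lam = 0" | "lam > 0" by linarith
  then show ?thesis
  proof cases
    case 1
    then show ?thesis using neg_false[OF assms(1,2) 1 bot] by simp
  next
    case 2
    have z: "\<forall>x\<in>{0..c}. \<forall>y\<in>{0..d}. u (x, y) = u (0, 0)" by (rule zero_case[OF assms(1,2) 2])
    have "u (0, 0) > 0" using bot[of 0] c_pos by simp
    moreover have "\<forall>p\<in>{0..c} \<times> {0..d}. u p = u (0, 0)"
    proof
      fix p assume "p \<in> {0..c} \<times> {0..d}"
      then obtain x y where "p = (x, y)" "x \<in> {0..c}" "y \<in> {0..d}" by auto
      with z show "u p = u (0, 0)" by blast
    qed
    ultimately show ?thesis by blast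
  next
    case 3
    then show ?thesis using pos_false[OF assms(1,2) 3 bot top left right] by simp
  qed
qed

end

lemma frontier_box:
  fixes c d :: real
  assumes "c > 0" "d > 0"
  shows "frontier ({0<..<c} \<times> {0<..<d}) = {0..c} \<times> {0..d} - {0<..<c} \<times> {0<..<d}"
proof -
  have "open ({0<..<c} \<times> {0<..<d})" by (intro open_Times open_greaterThanLessThan)
  then show ?thesis
    unfolding frontier_def closure_Times using assms by (simp add: interior_open)
qed

theorem corollary3p1:
  fixes c d lam :: real and u :: "real \<times> real \<Rightarrow> real" and S :: "(real \<times> real) set"
  assumes "c > 0" and "d > 0"
    and "open S" and "{0..c} \<times> {0..d} \<subseteq> S" and "C2_on S u"
    and "\<forall>p \<in> {0<..<c} \<times> {0<..<d}. - laplacian u p = lam * u p"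
    and "\<forall>p \<in> frontier ({0<..<c} \<times> {0<..<d}). u p > 0"
  shows "((\<forall>y\<in>{0..d}. u (0, y) = u (c, y) \<and> px u (0, y) = px u (c, y)) \<and>
          (\<forall>x\<in>{0..c}. u (x, 0) = u (x, d) \<and> py u (x, 0) = py u (x, d))
          \<longrightarrow> (\<exists>C > 0. \<forall>p \<in> {0..c} \<times> {0..d}. u p = C))
       \<and> ((\<forall>x\<in>{0..c}. py u (x, 0) = 0 \<and> py u (x, d) = 0) \<and>
          (\<forall>y\<in>{0..d}. u (0, y) = u (c, y) \<and> px u (0, y) = px u (c, y))
          \<longrightarrow> (\<exists>C > 0. \<forall>p \<in> {0..c} \<times> {0..d}. u p = C))"
proof -
  have cl: "closure ({0<..<c} \<times> {0<..<d}) = {0..c} \<times> {0..d}"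
    unfolding closure_Times using assms(1,2) by simp
  have pde: "px (px u) (x, y) + py (py u) (x, y) = - lam * u (x, y)" if "x \<in> {0..c}" "y \<in> {0..d}" for x y
  proof -
    let ?f = "\<lambda>p. px (px u) p + py (py u) p + lam * u p"
    have "continuous_on S ?f" using assms(5) unfolding C2_on_def by (intro continuous_intros) auto
    then have "continuous_on (closure ({0<..<c} \<times> {0<..<d})) ?f"
      unfolding cl using assms(4) by (rule continuous_on_subset)
    moreover have "\<And>p. p \<in> {0<..<c} \<times> {0<..<d} \<Longrightarrow> ?f p = 0"
    proof -
      fix p assume "p \<in> {0<..<c} \<times> {0<..<d}"
      then have "- laplacian u p = lam * u p" using assms(6) by blast
      then show "?f p = 0" unfolding laplacian_def by linarith
    qed
    moreover have "(x, y) \<in> closure ({0<..<c} \<times> {0<..<d})" unfolding cl using that by simp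
    ultimately have "?f (x, y) = 0" by (rule continuous_constant_on_closure)
    then show ?thesis by (simp add: algebra_simps)
  qed
  interpret R: rect c d lam u S
    by (unfold_locales) (use assms pde in auto)
  have fr: "p \<in> {0..c} \<times> {0..d} \<Longrightarrow> p \<notin> {0<..<c} \<times> {0<..<d} \<Longrightarrow> u p > 0" for p
    using assms(7) frontier_box[OF assms(1,2)] by auto
  have bot: "\<And>x. x \<in> {0..c} \<Longrightarrow> u (x, 0) > 0" using fr assms(2) by auto
  have top: "\<And>x. x \<in> {0..c} \<Longrightarrow> u (x, d) > 0" using fr assms(2) by auto
  have left: "\<And>y. y \<in> {0..d} \<Longrightarrow> u (0, y) > 0" using fr assms(1) by auto
  have right: "\<And>y. y \<in> {0..d} \<Longrightarrow> u (c, y) > 0" using fr assms(1) by auto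
  show ?thesis
  proof (intro conjI impI)
    assume h: "(\<forall>y\<in>{0..d}. u (0, y) = u (c, y) \<and> px u (0, y) = px u (c, y)) \<and>
          (\<forall>x\<in>{0..c}. u (x, 0) = u (x, d) \<and> py u (x, 0) = py u (x, d))"
    have "R.xbc" "R.ybc" using h unfolding R.xbc_def R.ybc_def by auto
    then show "\<exists>C > 0. \<forall>p \<in> {0..c} \<times> {0..d}. u p = C"
      by (rule R.main_const[OF _ _ bot top left right])
  next
    assume h: "(\<forall>x\<in>{0..c}. py u (x, 0) = 0 \<and> py u (x, d) = 0) \<and>
          (\<forall>y\<in>{0..d}. u (0, y) = u (c, y) \<and> px u (0, y) = px u (c, y))"
    have "R.xbc" "R.ybc" using h unfolding R.xbc_def R.ybc_def by auto
    then show "\<exists>C > 0. \<forall>p \<in> {0..c} \<times> {0..d}. u p = C"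
      by (rule R.main_const[OF _ _ bot top left right])
  qed
qed


end
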